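(* Let $X,Y\in\mathbb R^{d\times d}$ be symmetric positive definite with $Y\preceq X$. Then for all $0<c\le C$, $$X^{-1/2}(X-Y)X^{-1/2}\preceq\frac{3(\log C-\log c)}{\pi^2}(\log X-\log Y)+\Big(\frac{12cd}{\pi^2\lambda_{\min}(X)^2}+\frac{12d}{\pi^2C}\Big)\operatorname{Tr}(X-Y)\,I_d.$$
   Context: $\log$ of a symmetric positive definite matrix is the matrix logarithm; $\lambda_{\min}(X)$ is the smallest eigenvalue; $\preceq$ is the Loewner order. *)

theory Defs
  imports "HOL-Analysis.Analysis"
begin

definition diag_mat :: "real^'n \<Rightarrow> real^'n^'n" where
  "diag_mat d = (\<chi> i j. if i = j then d $ i else 0)"

definition sym_mat :: "real^'n^'n \<Rightarrow> bool" where
  "sym_mat A \<longleftrightarrow> transpose A = A"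

definition spd :: "real^'n^'n \<Rightarrow> bool" where
  "spd A \<longleftrightarrow> sym_mat A \<and> (\<forall>x. x \<noteq> 0 \<longrightarrow> x \<bullet> (A *v x) > 0)"

definition loewner_le :: "real^'n^'n \<Rightarrow> real^'n^'n \<Rightarrow> bool" (infix "\<preceq>\<^sub>L" 50) where
  "A \<preceq>\<^sub>L B \<longleftrightarrow> (\<forall>x. x \<bullet> (A *v x) \<le> x \<bullet> (B *v x))"

definition mat_fun :: "(real \<Rightarrow> real) \<Rightarrow> real^'n^'n \<Rightarrow> real^'n^'n" where
  "mat_fun f A = (SOME L. \<exists>P d. orthogonal_matrix P \<and> A = P ** diag_mat d ** transpose P
                        \<and> L = P ** diag_mat (\<chi> i. f (d $ i)) ** transpose P)"

definition mat_log :: "real^'n^'n \<Rightarrow> real^'n^'n" where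
  "mat_log A = mat_fun ln A"

definition mat_inv_sqrt :: "real^'n^'n \<Rightarrow> real^'n^'n" where
  "mat_inv_sqrt A = mat_fun (\<lambda>t. 1 / sqrt t) A"

definition lambda_min :: "real^'n^'n \<Rightarrow> real" where
  "lambda_min A = Min {l. \<exists>v. v \<noteq> 0 \<and> A *v v = l *\<^sub>R v}"

end

theory Submission
  imports Defs
begin

lemma sym_inner:
  fixes A :: "real^'n^'n"
  assumes "transpose A = A"
  shows "u \<bullet> (A *v w) = w \<bullet> (A *v u)"
proof -
  have "u \<bullet> (A *v w) = (u v* A) \<bullet> w" by (simp add: dot_lmul_matrix)
  also have "u v* A = transpose A *v u" by (simp add: transpose_matrix_vector)
  finally show ?thesis using assms by (simp add: inner_commute)
qed

lemma quad_zero_lemma: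
  fixes b q :: real
  assumes "\<And>t. 0 \<le> 2*t*b + t^2*q" "q \<ge> 0"
  shows "b = 0"
proof -
  have e: "2*(-b/(q+1))*b + (-b/(q+1))^2*q = - (b^2 * (q+2)) / (q+1)^2"
  proof -
    have h: "q+1 > 0" using assms(2) by simp
    have "(-b/(q+1))^2 = b^2/(q+1)^2" by (simp add: power_divide)
    moreover have "2*(-b/(q+1))*b = -2*b^2*(q+1)/(q+1)^2" using h by (simp add: power2_eq_square)
    ultimately show ?thesis using h by (simp add: add_divide_distrib[symmetric] diff_divide_distrib algebra_simps)
  qed
  have 1: "0 \<le> - (b^2 * (q+2)) / (q+1)^2" using assms(1)[of "-b/(q+1)"] e by simp
  have 2: "0 \<le> (b^2 * (q+2)) / (q+1)^2" using assms(2) by simp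
  have "(b^2 * (q+2)) / (q+1)^2 = 0" using 1 2 by linarith
  hence "b^2 * (q+2) = 0" using assms(2) by simp
  hence "b^2 = 0" using assms(2) by simp
  thus ?thesis by simp
qed

lemma eigvec_exists:
  fixes A :: "real^'n^'n"
  assumes sym: "transpose A = A" and sub: "subspace W"
    and inv: "\<And>x. x \<in> W \<Longrightarrow> A *v x \<in> W" and ne: "w \<in> W" "w \<noteq> 0"
  shows "\<exists>x\<in>W. norm x = 1 \<and> A *v x = (x \<bullet> (A *v x)) *\<^sub>R x"
proof -
  define K where "K = sphere (0::real^'n) 1 \<inter> W"
  have cK: "compact K" unfolding K_def
    by (intro compact_Int_closed compact_sphere closed_subspace sub)
  have wK: "(1/norm w) *\<^sub>R w \<in> K" using ne sub unfolding K_def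
    by (simp add: subspace_scale)
  have cont: "continuous_on K (\<lambda>x. x \<bullet> (A *v x))"
    by (intro continuous_intros matrix_vector_mult_linear_continuous_on[unfolded o_def])
  obtain x0 where x0K: "x0 \<in> K" and mx: "\<And>y. y \<in> K \<Longrightarrow> y \<bullet> (A *v y) \<le> x0 \<bullet> (A *v x0)"
    using continuous_attains_sup[OF cK _ cont] wK by blast
  define m where "m = x0 \<bullet> (A *v x0)"
  have x0W: "x0 \<in> W" and nx0: "norm x0 = 1" using x0K unfolding K_def by auto
  have bound: "y \<bullet> (A *v y) \<le> m * (y \<bullet> y)" if yW: "y \<in> W" for y
  proof (cases "y = 0")
    case True thus ?thesis by simp
  next
    case False
    let ?z = "(1/norm y) *\<^sub>R y"
    have "?z \<in> K" using yW False sub unfolding K_def by (simp add: subspace_scale)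
    hence "?z \<bullet> (A *v ?z) \<le> m" using mx m_def by blast
    hence "(1/norm y)^2 * (y \<bullet> (A *v y)) \<le> m"
      by (simp add: matrix_vector_mult_scaleR power2_eq_square)
    hence "y \<bullet> (A *v y) \<le> m * (norm y)^2" using False
      by (simp add: field_simps)
    thus ?thesis by (simp add: power2_norm_eq_inner)
  qed
  define bf where "bf u v = m * (u \<bullet> v) - u \<bullet> (A *v v)" for u v
  have bpos: "bf y y \<ge> 0" if "y \<in> W" for y using bound[OF that] unfolding bf_def by simp
  have b00: "bf x0 x0 = 0" using nx0 unfolding bf_def m_def
    by (simp add: power2_norm_eq_inner[symmetric])
  have cross: "bf x0 y = 0" if yW: "y \<in> W" for y
  proof (rule quad_zero_lemma)
    show "0 \<le> bf y y" by (rule bpos[OF yW])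
    fix t :: real
    have "x0 + t *\<^sub>R y \<in> W" using x0W yW sub by (simp add: subspace_add subspace_scale)
    hence "0 \<le> bf (x0 + t *\<^sub>R y) (x0 + t *\<^sub>R y)" by (rule bpos)
    also have "bf (x0 + t *\<^sub>R y) (x0 + t *\<^sub>R y) = bf x0 x0 + 2*t*bf x0 y + t^2 * bf y y"
      using sym_inner[OF sym, of y x0]
      by (simp add: bf_def matrix_vector_right_distrib matrix_vector_mult_scaleR
          inner_add_left inner_add_right algebra_simps power2_eq_square inner_commute)
    finally show "0 \<le> 2*t*bf x0 y + t^2 * bf y y" using b00 by simp
  qed
  define z where "z = m *\<^sub>R x0 - A *v x0"
  have zW: "z \<in> W" unfolding z_def using x0W inv sub by (simp add: subspace_diff subspace_scale)
  have "z \<bullet> z = bf x0 z"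
    using sym_inner[OF sym, of z x0]
    unfolding z_def bf_def by (simp add: inner_diff_left inner_commute)
  hence "z = 0" using cross[OF zW] by simp
  hence "A *v x0 = m *\<^sub>R x0" unfolding z_def by simp
  thus ?thesis using x0W nx0 m_def by blast
qed

lemma orthonormal_eigs:
  fixes A :: "real^'n^'n"
  assumes sym: "transpose A = A"
  shows "k \<le> CARD('n) \<Longrightarrow> \<exists>B. finite B \<and> card B = k \<and>
     (\<forall>x\<in>B. norm x = 1 \<and> A *v x = (x \<bullet> (A *v x)) *\<^sub>R x) \<and> pairwise orthogonal B"
proof (induction k)
  case 0
  show ?case by (rule exI[of _ "{}"]) simp
next
  case (Suc k)
  then obtain B where fB: "finite B" and cB: "card B = k"
    and eB: "\<forall>x\<in>B. norm x = 1 \<and> A *v x = (x \<bullet> (A *v x)) *\<^sub>R x"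
    and oB: "pairwise orthogonal B" by auto
  have "0 \<notin> B" using eB by fastforce
  hence "independent B" using oB pairwise_orthogonal_independent by blast
  hence "dim B = k" using cB dim_eq_card_independent by blast
  hence "dim B < DIM(real^'n)" using Suc.prems by simp
  then obtain w where w0: "w \<noteq> 0" and wo: "\<And>y. y \<in> span B \<Longrightarrow> orthogonal w y"
    by (rule orthogonal_to_subspace_exists) blast
  define W where "W = {z::real^'n. \<forall>b\<in>B. b \<bullet> z = 0}"
  have subW: "subspace W" unfolding W_def subspace_def
    by (auto simp: inner_add_right inner_scaleR_right)
  have wW: "w \<in> W" unfolding W_def using wo span_base
    by (fastforce simp: orthogonal_def inner_commute)
  have invW: "A *v z \<in> W" if "z \<in> W" for z
  proof -
    { fix b assume bB: "b \<in> B"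
      have "b \<bullet> (A *v z) = z \<bullet> (A *v b)" by (rule sym_inner[OF sym])
      also have "\<dots> = (b \<bullet> (A *v b)) * (z \<bullet> b)" using eB bB
        by (metis inner_scaleR_right)
      also have "z \<bullet> b = 0" using that bB unfolding W_def by (simp add: inner_commute)
      finally have "b \<bullet> (A *v z) = 0" by simp }
    thus ?thesis unfolding W_def by blast
  qed
  obtain x0 where x0W: "x0 \<in> W" and nx0: "norm x0 = 1"
     and ex0: "A *v x0 = (x0 \<bullet> (A *v x0)) *\<^sub>R x0"
    using eigvec_exists[OF sym subW invW wW w0] by blast
  have x0B: "x0 \<notin> B"
  proof
    assume "x0 \<in> B"
    hence "x0 \<bullet> x0 = 0" using x0W unfolding W_def by blast
    thus False using nx0 by simp
  qed
  show ?case
  proof (intro exI[of _ "insert x0 B"] conjI)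
    show "finite (insert x0 B)" using fB by simp
    show "card (insert x0 B) = Suc k" using fB x0B cB by simp
    show "\<forall>x\<in>insert x0 B. norm x = 1 \<and> A *v x = (x \<bullet> (A *v x)) *\<^sub>R x"
      using eB nx0 ex0 by blast
    show "pairwise orthogonal (insert x0 B)"
      unfolding pairwise_insert using oB x0W unfolding W_def
      by (auto simp: orthogonal_def inner_commute)
  qed
qed

lemma spectral:
  fixes A :: "real^'n^'n"
  assumes sym: "transpose A = A"
  shows "\<exists>P d. orthogonal_matrix P \<and> A = P ** diag_mat d ** transpose P"
proof -
  obtain B where fB: "finite B" and cB: "card B = CARD('n)"
    and eB: "\<forall>x\<in>B. norm x = 1 \<and> A *v x = (x \<bullet> (A *v x)) *\<^sub>R x"
    and oB: "pairwise orthogonal B"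
    using orthonormal_eigs[OF sym, of "CARD('n)"] by auto
  obtain h where bh: "bij_betw h (UNIV::'n set) B"
    using finite_same_card_bij[of "UNIV::'n set" B] fB cB by auto
  have hB: "h j \<in> B" for j using bh by (auto simp: bij_betw_def)
  have hinj: "h j = h k \<Longrightarrow> j = k" for j k using bh by (auto simp: bij_betw_def inj_on_def)
  define d where "d = (\<chi> j. h j \<bullet> (A *v h j))"
  define P where "P = (\<chi> i j. h j $ i)"
  have hh: "h j \<bullet> h k = (if j = k then 1 else 0)" for j k
  proof (cases "j = k")
    case True
    thus ?thesis using eB hB[of j] by (simp add: power2_norm_eq_inner[symmetric])
  next
    case False
    hence "h j \<noteq> h k" using hinj by blast
    thus ?thesis using oB hB False unfolding pairwise_def orthogonal_def by auto
  qed
  have tPP: "transpose P ** P = mat 1"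
    unfolding matrix_matrix_mult_def transpose_def P_def mat_def
    using hh by (simp add: inner_vec_def vec_eq_iff)
  hence oP: "orthogonal_matrix P" by (simp add: orthogonal_matrix)
  hence PtP: "P ** transpose P = mat 1" by (simp add: orthogonal_matrix_def)
  have Ah: "A *v h j = d $ j *\<^sub>R h j" for j using eB hB[of j] unfolding d_def by simp
  have AP: "A ** P = P ** diag_mat d"
  proof -
    have "(A ** P) $ i $ j = (P ** diag_mat d) $ i $ j" for i j
    proof -
      have "(A ** P) $ i $ j = (A *v h j) $ i"
        unfolding matrix_matrix_mult_def matrix_vector_mult_def P_def by simp
      also have "\<dots> = d $ j * h j $ i" using Ah by simp
      also have "\<dots> = (P ** diag_mat d) $ i $ j"
        unfolding matrix_matrix_mult_def diag_mat_def P_def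
        by (simp add: if_distrib[where f="\<lambda>x. _ * x"] sum.delta' cong: if_cong)
      finally show ?thesis .
    qed
    thus ?thesis by (simp add: vec_eq_iff)
  qed
  have "P ** diag_mat d ** transpose P = A ** P ** transpose P" using AP by simp
  also have "\<dots> = A" using PtP by (simp add: matrix_mul_assoc[symmetric])
  finally show ?thesis using oP by metis
qed

declare transpose_matrix_vector [simp del]

lemma orth_tPP: "orthogonal_matrix P \<Longrightarrow> transpose P ** P = mat 1"
  by (simp add: orthogonal_matrix_def)
lemma orth_PtP: "orthogonal_matrix P \<Longrightarrow> P ** transpose P = mat 1"
  by (simp add: orthogonal_matrix_def)

lemma orth_tPPv:
  fixes P :: "real^'n^'n"
  shows "orthogonal_matrix P \<Longrightarrow> transpose P *v (P *v z) = z"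
  by (simp add: matrix_vector_mul_assoc orth_tPP)

lemma orth_PtPv:
  fixes P :: "real^'n^'n"
  shows "orthogonal_matrix P \<Longrightarrow> P *v (transpose P *v z) = z"
  by (simp add: matrix_vector_mul_assoc orth_PtP)

lemma inner_Pz:
  fixes P :: "real^'n^'n"
  shows "w \<bullet> (P *v z) = (transpose P *v w) \<bullet> z"
  by (simp add: transpose_matrix_vector dot_lmul_matrix)

lemma inner_PP:
  fixes P :: "real^'n^'n"
  shows "orthogonal_matrix P \<Longrightarrow> (P *v a) \<bullet> (P *v b) = a \<bullet> b"
  by (simp add: inner_Pz orth_tPPv)

lemma diag_mv: "diag_mat g *v z = (\<chi> i. g $ i * z $ i)"
  unfolding diag_mat_def matrix_vector_mult_def
  by (simp add: if_distrib[where f="\<lambda>x. x * _"] sum.delta cong: if_cong)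

lemma fun_mv:
  fixes P :: "real^'n^'n"
  shows "(P ** diag_mat g ** transpose P) *v w = P *v (\<chi> i. g$i * (transpose P *v w)$i)"
  by (simp add: matrix_vector_mul_assoc[symmetric] diag_mv)

lemma fun_quad:
  fixes P :: "real^'n^'n"
  shows "w \<bullet> ((P ** diag_mat g ** transpose P) *v w') =
     (\<Sum>i\<in>UNIV. g$i * (transpose P *v w)$i * (transpose P *v w')$i)"
  unfolding fun_mv inner_Pz by (simp add: inner_vec_def algebra_simps)

lemma transpose_diag: "transpose (diag_mat g) = diag_mat g"
  unfolding diag_mat_def transpose_def by (simp add: vec_eq_iff)

lemma fun_sym:
  fixes P :: "real^'n^'n"
  shows "transpose (P ** diag_mat g ** transpose P) = P ** diag_mat g ** transpose P"
  by (simp add: matrix_transpose_mul transpose_diag matrix_mul_assoc)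

lemma diag_unique:
  fixes P Q :: "real^'n^'n"
  assumes oP: "orthogonal_matrix P" and oQ: "orthogonal_matrix Q"
    and eq: "P ** diag_mat d ** transpose P = Q ** diag_mat e ** transpose Q"
  shows "P ** diag_mat (\<chi> i. f (d$i)) ** transpose P = Q ** diag_mat (\<chi> i. f (e$i)) ** transpose Q"
proof -
  define U where "U = transpose Q ** P"
  have "U ** diag_mat d = transpose Q ** (P ** diag_mat d ** transpose P) ** P"
    unfolding U_def using orth_tPP[OF oP]
    by (simp add: matrix_mul_assoc[symmetric])
  also have "\<dots> = transpose Q ** (Q ** diag_mat e ** transpose Q) ** P" using eq by simp
  also have "\<dots> = diag_mat e ** U"
    unfolding U_def using orth_tPP[OF oQ]
    by (simp add: matrix_mul_assoc)
  finally have UD: "U ** diag_mat d = diag_mat e ** U" .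
  have ent: "U $ i $ j * d $ j = e $ i * U $ i $ j" for i j
  proof -
    have "(U ** diag_mat d) $ i $ j = (diag_mat e ** U) $ i $ j" using UD by simp
    thus ?thesis unfolding matrix_matrix_mult_def diag_mat_def
      by (simp add: if_distrib[where f="\<lambda>x. _ * x"] if_distrib[where f="\<lambda>x. x * _"] sum.delta sum.delta' cong: if_cong)
  qed
  have ent2: "U $ i $ j * f (d $ j) = f (e $ i) * U $ i $ j" for i j
  proof (cases "U $ i $ j = 0")
    case False
    hence "d $ j = e $ i" using ent[of i j] by simp
    thus ?thesis by simp
  qed simp
  have UF: "U ** diag_mat (\<chi> i. f (d$i)) = diag_mat (\<chi> i. f (e$i)) ** U"
  proof -
    have "(U ** diag_mat (\<chi> i. f (d$i))) $ i $ j = (diag_mat (\<chi> i. f (e$i)) ** U) $ i $ j" for i j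
      unfolding matrix_matrix_mult_def diag_mat_def
      using ent2[of i j]
      by (simp add: if_distrib[where f="\<lambda>x. _ * x"] if_distrib[where f="\<lambda>x. x * _"] sum.delta sum.delta' cong: if_cong)
    thus ?thesis by (simp add: vec_eq_iff)
  qed
  have QU: "Q ** U = P" unfolding U_def using orth_PtP[OF oQ] by (simp add: matrix_mul_assoc)
  have "P ** diag_mat (\<chi> i. f (d$i)) ** transpose P = Q ** (U ** diag_mat (\<chi> i. f (d$i))) ** transpose P"
    using QU by (simp add: matrix_mul_assoc)
  also have "\<dots> = Q ** diag_mat (\<chi> i. f (e$i)) ** (U ** transpose P)"
    using UF by (simp add: matrix_mul_assoc)
  also have "U ** transpose P = transpose Q"
    unfolding U_def using orth_PtP[OF oP] by (simp add: matrix_mul_assoc[symmetric])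
  finally show ?thesis .
qed

lemma mat_fun_eq:
  fixes P :: "real^'n^'n"
  assumes oP: "orthogonal_matrix P" and A: "A = P ** diag_mat d ** transpose P"
  shows "mat_fun f A = P ** diag_mat (\<chi> i. f (d$i)) ** transpose P"
proof -
  let ?R = "\<lambda>L. \<exists>P d. orthogonal_matrix P \<and> A = P ** diag_mat d ** transpose P
                        \<and> L = P ** diag_mat (\<chi> i. f (d $ i)) ** transpose P"
  have ex: "?R (P ** diag_mat (\<chi> i. f (d$i)) ** transpose P)" using oP A by blast
  have "?R (mat_fun f A)" unfolding mat_fun_def by (rule someI[of ?R, OF ex])
  then obtain P' d' where oP': "orthogonal_matrix P'" and A': "A = P' ** diag_mat d' ** transpose P'"
    and L: "mat_fun f A = P' ** diag_mat (\<chi> i. f (d' $ i)) ** transpose P'" by blast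
  show ?thesis unfolding L using diag_unique[OF oP' oP, of d' d f] A A' by simp
qed

lemma mono_deriv:
  fixes f f' :: "real \<Rightarrow> real"
  assumes "a \<le> b" and d: "\<And>x. a \<le> x \<Longrightarrow> x \<le> b \<Longrightarrow> DERIV f x :> f' x \<and> f' x \<ge> 0"
  shows "f a \<le> f b"
proof (rule DERIV_nonneg_imp_increasing_open[OF assms(1)])
  fix x assume "a < x" "x < b"
  thus "\<exists>y. DERIV f x :> y \<and> 0 \<le> y" using d[of x] by auto
next
  show "continuous_on {a..b} f" by (rule DERIV_atLeastAtMost_imp_continuous_on) (use d in blast)
qed

definition Phi :: "real \<Rightarrow> real \<Rightarrow> real" where
  "Phi x T = 2 / sqrt x * arctan (sqrt (T / x))"

lemma Phi_deriv:
  assumes x: "x > 0" and T: "T > 0"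
  shows "DERIV (Phi x) T :> 1 / (sqrt T * (x + T))"
proof -
  have "DERIV (\<lambda>T. 2 / sqrt x * arctan (sqrt (T / x))) T :>
     2 / sqrt x * (inverse (1 + (sqrt (T/x))\<^sup>2) * (inverse (sqrt (T/x)) / 2 * (1 / x)))"
  proof -
    have d1: "DERIV (\<lambda>T. T/x) T :> 1/x" using DERIV_cdivide[OF DERIV_ident, of x] by simp
    have d2: "DERIV sqrt (T/x) :> inverse (sqrt (T/x)) / 2" by (rule DERIV_real_sqrt) (simp add: x T)
    have d3: "DERIV arctan (sqrt (T/x)) :> inverse (1 + (sqrt (T/x))\<^sup>2)" by (rule DERIV_arctan)
    note d5 = DERIV_chain2[OF d3 DERIV_chain2[OF d2 d1]]
    show ?thesis using DERIV_cmult[OF d5, of "2 / sqrt x"] by simp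
  qed
  moreover have "2 / sqrt x * (inverse (1 + (sqrt (T/x))\<^sup>2) * (inverse (sqrt (T/x)) / 2 * (1 / x)))
      = 1 / (sqrt T * (x + T))"
  proof -
    have s: "(sqrt (T/x))\<^sup>2 = T/x" using x T by simp
    have s2: "sqrt (T/x) = sqrt T / sqrt x" by (simp add: real_sqrt_divide)
    have i1: "inverse (1 + T/x) = x/(x+T)" using x T by (simp add: field_simps)
    have i2: "inverse (sqrt T / sqrt x) = sqrt x / sqrt T" by simp
    have sxp: "sqrt x > 0" "sqrt T > 0" "x + T > 0" using x T by auto
    have "2 / sqrt x * (x/(x+T) * (sqrt x / sqrt T / 2 * (1 / x))) = (2 * x * sqrt x) / (2 * x * sqrt x * (sqrt T * (x + T)))"
      by (simp add: divide_simps)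
    also have "\<dots> = 1 / (sqrt T * (x + T))" 
    proof -
      have k: "2 * x * sqrt x \<noteq> 0" using sxp x by simp
      show ?thesis using nonzero_mult_divide_mult_cancel_left[OF k, of 1 "sqrt T * (x + T)"] by simp
    qed
    finally have fin: "2 / sqrt x * (x/(x+T) * (sqrt x / sqrt T / 2 * (1 / x))) = 1 / (sqrt T * (x + T))" .
    show ?thesis by (subst s, subst i1, subst s2, subst i2, rule fin)
  qed
  ultimately show ?thesis unfolding Phi_def[abs_def] by simp
qed

lemma Phi_nonneg: "x > 0 \<Longrightarrow> c \<ge> 0 \<Longrightarrow> 0 \<le> Phi x c"
  unfolding Phi_def using arctan_monotone'[of 0 "sqrt (c/x)"] by simp

lemma Phi_le: assumes "x > 0" "c \<ge> 0" shows "Phi x c \<le> 2 * sqrt c / x"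
proof -
  have "arctan (sqrt (c/x)) \<le> sqrt (c/x)" by (rule arctan_le_self) (use assms in simp)
  hence "Phi x c \<le> 2 / sqrt x * sqrt (c/x)" unfolding Phi_def
    by (rule mult_left_mono) (use assms in simp)
  also have "\<dots> = 2 * sqrt c / x" using assms
    by (simp add: real_sqrt_divide field_simps)
  finally show ?thesis .
qed

lemma Phi_tail:
  assumes x: "x > 0" and C: "C > 0"
  shows "0 \<le> pi / sqrt x - Phi x C" "pi / sqrt x - Phi x C \<le> 2 / sqrt C"
proof -
  have z: "sqrt (C/x) > 0" using x C by simp
  have at: "arctan (1 / sqrt (C/x)) = pi/2 - arctan (sqrt (C/x))"
    using arctan_inverse[of "sqrt (C/x)"] z by (simp add: inverse_eq_divide)
  have e: "pi / sqrt x - Phi x C = 2 / sqrt x * arctan (1 / sqrt (C/x))"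
    unfolding at Phi_def using x by (simp add: field_simps)
  have a0: "0 \<le> arctan (1 / sqrt (C/x))" using arctan_monotone'[of 0 "1 / sqrt (C/x)"] z by simp
  show "0 \<le> pi / sqrt x - Phi x C" unfolding e using a0 x by simp
  have "arctan (1 / sqrt (C/x)) \<le> 1 / sqrt (C/x)" by (rule arctan_le_self) (use z in simp)
  hence "2 / sqrt x * arctan (1 / sqrt (C/x)) \<le> 2 / sqrt x * (1 / sqrt (C/x))"
    by (rule mult_left_mono) (use x in simp)
  also have "\<dots> = 2 / sqrt C" using x C by (simp add: real_sqrt_divide field_simps)
  finally show "pi / sqrt x - Phi x C \<le> 2 / sqrt C" unfolding e .
qed

lemma cs_param:
  fixes q A K :: real
  assumes "A \<ge> 0" "q \<ge> 0" and h: "\<And>s. 0 \<le> s^2 * q * A - 2 * s * q + K"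
  shows "q \<le> A * K"
proof (cases "A > 0")
  case True
  have "0 \<le> (1/A)^2 * q * A - 2 * (1/A) * q + K" by (rule h)
  also have "(1/A)^2 * q * A - 2 * (1/A) * q + K = K - q / A" using True
    by (simp add: power2_eq_square field_simps)
  finally have "q / A \<le> K" by simp
  thus ?thesis using True by (simp add: divide_le_eq mult.commute)
next
  case False
  hence A0: "A = 0" using assms(1) by simp
  show ?thesis
  proof (rule ccontr)
    assume "\<not> q \<le> A * K"
    hence qp: "q > 0" using A0 by simp
    have "0 \<le> ((K+1)/(2*q))^2 * q * A - 2 * ((K+1)/(2*q)) * q + K" by (rule h)
    also have "\<dots> = -1" using A0 qp by (simp add: field_simps)
    finally show False by simp
  qed
qed

lemma bil_expand:
  fixes D :: "real^'n^'n"
  shows "(a + b) \<bullet> (D *v (a + b)) = a \<bullet> (D *v a) + a \<bullet> (D *v b) + b \<bullet> (D *v a) + b \<bullet> (D *v b)"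
    and "(a - b) \<bullet> (D *v (a - b)) = a \<bullet> (D *v a) - a \<bullet> (D *v b) - b \<bullet> (D *v a) + b \<bullet> (D *v b)"
  by (simp_all add: matrix_vector_right_distrib matrix_vector_mult_diff_distrib
      inner_add_left inner_add_right inner_diff_left inner_diff_right)

lemma axis_quad:
  fixes D :: "real^'n^'n"
  shows "axis i 1 \<bullet> (D *v axis j 1) = D $ i $ j"
  unfolding axis_def matrix_vector_mult_def inner_vec_def
  by (simp add: if_distrib[where f="\<lambda>x. x * _"] if_distrib[where f="\<lambda>x. _ * x"] sum.delta cong: if_cong)

lemma quad_expand:
  fixes D :: "real^'n^'n"
  shows "w \<bullet> (D *v w) = (\<Sum>i\<in>UNIV. \<Sum>j\<in>UNIV. w$i * D$i$j * w$j)"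
  by (simp add: inner_vec_def matrix_vector_mult_def sum_distrib_left mult.assoc)

lemma psd_offdiag:
  fixes D :: "real^'n^'n"
  assumes sym: "transpose D = D" and psd: "\<And>w. 0 \<le> w \<bullet> (D *v w)"
  shows "2 * \<bar>D$i$j\<bar> \<le> D$i$i + D$j$j"
proof -
  have s: "axis j 1 \<bullet> (D *v axis i 1) = axis i 1 \<bullet> (D *v axis j 1)"
    by (rule sym_inner[OF sym])
  have p: "0 \<le> (axis i 1 + axis j 1) \<bullet> (D *v (axis i 1 + axis j 1))" by (rule psd)
  have m: "0 \<le> (axis i 1 - axis j 1) \<bullet> (D *v (axis i 1 - axis j 1))" by (rule psd)
  show ?thesis using p m s unfolding bil_expand axis_quad by linarith
qed

lemma psd_diag: 
  fixes D :: "real^'n^'n"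
  assumes psd: "\<And>w. 0 \<le> w \<bullet> (D *v w)"
  shows "0 \<le> D$i$i"
  using psd[of "axis i 1"] unfolding axis_quad .

lemma trace_nonneg:
  fixes D :: "real^'n^'n"
  assumes psd: "\<And>w. 0 \<le> w \<bullet> (D *v w)"
  shows "0 \<le> trace D"
  unfolding trace_def by (rule sum_nonneg) (rule psd_diag[OF psd])

lemma psd_trace_bound:
  fixes D :: "real^'n^'n"
  assumes sym: "transpose D = D" and psd: "\<And>w. 0 \<le> w \<bullet> (D *v w)"
  shows "w \<bullet> (D *v w) \<le> real CARD('n) * trace D * (w \<bullet> w)"
proof -
  let ?a = "\<lambda>i. \<bar>w$i\<bar>"
  have "w \<bullet> (D *v w) = (\<Sum>i\<in>UNIV. \<Sum>j\<in>UNIV. w$i * D$i$j * w$j)" by (rule quad_expand)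
  also have "\<dots> \<le> (\<Sum>i\<in>UNIV. \<Sum>j\<in>UNIV. ?a i * ?a j * ((D$i$i + D$j$j)/2))"
  proof (intro sum_mono)
    fix i j
    have "w$i * D$i$j * w$j \<le> \<bar>w$i * D$i$j * w$j\<bar>" by simp
    also have "\<dots> = ?a i * ?a j * \<bar>D$i$j\<bar>" by (simp add: abs_mult)
    also have "\<dots> \<le> ?a i * ?a j * ((D$i$i + D$j$j)/2)"
      using psd_offdiag[OF sym psd, of i j] by (intro mult_left_mono) auto
    finally show "w$i * D$i$j * w$j \<le> ?a i * ?a j * ((D$i$i + D$j$j)/2)" .
  qed
  also have "\<dots> = (\<Sum>i\<in>UNIV. \<Sum>j\<in>UNIV. ?a i * ?a j * D$i$i / 2) + (\<Sum>i\<in>UNIV. \<Sum>j\<in>UNIV. ?a i * ?a j * D$j$j / 2)"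
    by (simp add: sum.distrib[symmetric] add_divide_distrib distrib_left)
  also have "(\<Sum>i\<in>UNIV. \<Sum>j\<in>UNIV. ?a i * ?a j * D$j$j / 2) = (\<Sum>i\<in>UNIV. \<Sum>j\<in>UNIV. ?a i * ?a j * D$i$i / 2)"
    by (subst sum.swap) (simp add: mult.commute)
  also have "(\<Sum>i\<in>UNIV. \<Sum>j\<in>UNIV. ?a i * ?a j * D$i$i / 2) + (\<Sum>i\<in>UNIV. \<Sum>j\<in>UNIV. ?a i * ?a j * D$i$i / 2)
     = (\<Sum>i\<in>UNIV. ?a i * D$i$i) * (\<Sum>j\<in>UNIV. ?a j)"
    by (simp add: sum_distrib_left sum_distrib_right mult.commute mult.left_commute sum.distrib[symmetric])
  also have "\<dots> \<le> (norm w * trace D) * (real CARD('n) * norm w)"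
  proof (rule mult_mono)
    show "(\<Sum>i\<in>UNIV. ?a i * D$i$i) \<le> norm w * trace D"
      unfolding trace_def sum_distrib_left
      by (intro sum_mono mult_right_mono component_le_norm_cart psd_diag[OF psd])
    have "(\<Sum>j\<in>UNIV. ?a j) \<le> (\<Sum>j\<in>(UNIV::'n set). norm w)"
      by (intro sum_mono component_le_norm_cart)
    thus "(\<Sum>j\<in>UNIV. ?a j) \<le> real CARD('n) * norm w" by simp
    show "0 \<le> norm w * trace D" using trace_nonneg[OF psd] by simp
    show "0 \<le> (\<Sum>j\<in>UNIV. ?a j)" by (simp add: sum_nonneg)
  qed
  also have "\<dots> = real CARD('n) * trace D * (w \<bullet> w)"
    by (simp add: power2_norm_eq_inner[symmetric] power2_eq_square)
  finally show ?thesis .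
qed

lemma lin3:
  fixes A B C AB AC BC :: real
  assumes "0 \<le> A - AB - AB + B" "0 \<le> A - AC - AC + C" "0 \<le> B - BC - BC + C"
  shows "A + B + C + 2*AB + 2*AC + 2*BC \<le> 3 * (A + B + C)"
proof -
  have "0 \<le> (A - AB - AB + B) + (A - AC - AC + C) + (B - BC - BC + C)"
    by (rule add_nonneg_nonneg[OF add_nonneg_nonneg]) (rule assms)+
  moreover have "(A - AB - AB + B) + (A - AC - AC + C) + (B - BC - BC + C)
     = 3 * (A + B + C) - (A + B + C + 2*AB + 2*AC + 2*BC)" by (simp add: algebra_simps)
  ultimately show ?thesis by simp
qed

lemma psd_three:
  fixes D :: "real^'n^'n"
  assumes sym: "transpose D = D" and psd: "\<And>w. 0 \<le> w \<bullet> (D *v w)"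
  shows "(a + b + c) \<bullet> (D *v (a + b + c)) \<le> 3 * (a \<bullet> (D *v a) + b \<bullet> (D *v b) + c \<bullet> (D *v c))"
proof -
  have s1: "b \<bullet> (D *v a) = a \<bullet> (D *v b)" by (rule sym_inner[OF sym])
  have s2: "c \<bullet> (D *v a) = a \<bullet> (D *v c)" by (rule sym_inner[OF sym])
  have s3: "c \<bullet> (D *v b) = b \<bullet> (D *v c)" by (rule sym_inner[OF sym])
  have p1: "0 \<le> (a - b) \<bullet> (D *v (a - b))" by (rule psd)
  have p2: "0 \<le> (a - c) \<bullet> (D *v (a - c))" by (rule psd)
  have p3: "0 \<le> (b - c) \<bullet> (D *v (b - c))" by (rule psd)
  have e: "(a + b + c) \<bullet> (D *v (a + b + c)) = a \<bullet> (D *v a) + b \<bullet> (D *v b) + c \<bullet> (D *v c)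
     + 2 * (a \<bullet> (D *v b)) + 2 * (a \<bullet> (D *v c)) + 2 * (b \<bullet> (D *v c))"
    unfolding bil_expand(1)[of "a+b" c] bil_expand(1)[of a b]
    using s1 s2 s3 by (simp add: inner_add_left inner_add_right matrix_vector_right_distrib)
  show ?thesis unfolding e by (rule lin3) (use p1 p2 p3 s1 s2 s3 in \<open>simp_all add: bil_expand(2)\<close>)
qed

lemma deriv_kln:
  fixes y T k :: real
  assumes "y + T > 0"
  shows "DERIV (\<lambda>T. k * ln (y + T)) T :> k / (y + T)"
proof -
  have d1: "DERIV (\<lambda>T. y + T) T :> 0 + 1" by (rule DERIV_add[OF DERIV_const DERIV_ident])
  have "DERIV (\<lambda>T. ln (y + T)) T :> 1 / (y + T) * (0 + 1)"
    by (rule DERIV_chain2[OF DERIV_ln_divide[OF assms] d1])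
  from DERIV_cmult[OF this, of k] show ?thesis by simp
qed

lemma deriv_kPhi:
  fixes x T k c :: real
  assumes "x > 0" "T > 0"
  shows "DERIV (\<lambda>T. k * (Phi x T - Phi x c)) T :> k / (sqrt T * (x + T))"
proof -
  have "DERIV (\<lambda>T. Phi x T - Phi x c) T :> 1 / (sqrt T * (x + T)) - 0"
    by (rule DERIV_diff[OF Phi_deriv[OF assms] DERIV_const])
  from DERIV_cmult[OF this, of k] show ?thesis by simp
qed

lemma sum_sq_norm:
  fixes P :: "real^'n^'n"
  assumes "orthogonal_matrix P"
  shows "(\<Sum>i\<in>UNIV. ((transpose P *v v) $ i)^2) = v \<bullet> v"
proof -
  have "(transpose P *v v) \<bullet> (transpose P *v v) = v \<bullet> v"
    using inner_PP[of "transpose P" v v] assms by (simp add: orthogonal_matrix_transpose)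
  thus ?thesis by (simp add: inner_vec_def power2_eq_square)
qed


lemma core:
  fixes P Q D :: "real^'n^'n" and x y v :: "real^'n" and c C lam :: real
  assumes oP: "orthogonal_matrix P" and oQ: "orthogonal_matrix Q"
    and xpos: "\<And>i. x$i > 0" and ypos: "\<And>i. y$i > 0"
    and Ddef: "D = P ** diag_mat x ** transpose P - Q ** diag_mat y ** transpose Q"
    and symD: "transpose D = D" and psdD: "\<And>w. 0 \<le> w \<bullet> (D *v w)"
    and lam: "lam > 0" "\<And>i. lam \<le> x$i" and c: "0 < c" "c \<le> C"
  shows "(P *v (\<chi> i. (transpose P *v v)$i / sqrt (x$i))) \<bullet> (D *v (P *v (\<chi> i. (transpose P *v v)$i / sqrt (x$i))))
     \<le> 3 * (ln C - ln c) / pi^2 * ((\<Sum>i\<in>UNIV. ((transpose P *v v)$i)^2 * ln (x$i)) - (\<Sum>j\<in>UNIV. ((transpose Q *v v)$j)^2 * ln (y$j)))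
       + (12 * c * real CARD('n) / (pi^2 * lam^2) + 12 * real CARD('n) / (pi^2 * C)) * trace D * (v \<bullet> v)"
proof -
  define \<alpha> where "\<alpha> = transpose P *v v"
  define \<beta> where "\<beta> = transpose Q *v v"
  define nv where "nv = v \<bullet> v"
  define Sv where "Sv = P *v (\<chi> i. \<alpha>$i / sqrt (x$i))"
  define qd where "qd a b = a \<bullet> (D *v b)" for a b
  have qsym: "qd a b = qd b a" for a b unfolding qd_def by (rule sym_inner[OF symD])
  have qpos: "0 \<le> qd a a" for a unfolding qd_def by (rule psdD)
  have sa: "(\<Sum>i\<in>UNIV. (\<alpha>$i)^2) = nv" unfolding \<alpha>_def nv_def by (rule sum_sq_norm[OF oP])
  have sb: "(\<Sum>i\<in>UNIV. (\<beta>$i)^2) = nv" unfolding \<beta>_def nv_def by (rule sum_sq_norm[OF oQ])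
  have nv0: "nv \<ge> 0" unfolding nv_def by simp
  define u where "u T = P *v (\<chi> i. \<alpha>$i / (x$i + T))" for T
  define F where "F T = (\<Sum>j\<in>UNIV. (\<beta>$j)^2 * ln (y$j + T)) - (\<Sum>i\<in>UNIV. (\<alpha>$i)^2 * ln (x$i + T))" for T
  define F' where "F' T = (\<Sum>j\<in>UNIV. (\<beta>$j)^2 / (y$j + T)) - (\<Sum>i\<in>UNIV. (\<alpha>$i)^2 / (x$i + T))" for T
  have dF: "DERIV F T :> F' T" if "T \<ge> 0" for T
  proof -
    have a: "DERIV (\<lambda>T. \<Sum>j\<in>UNIV. (\<beta>$j)^2 * ln (y$j + T)) T :> (\<Sum>j\<in>UNIV. (\<beta>$j)^2 / (y$j + T))"
      by (rule DERIV_sum, rule deriv_kln) (use ypos that in \<open>simp add: add_pos_nonneg\<close>)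
    have b: "DERIV (\<lambda>T. \<Sum>i\<in>UNIV. (\<alpha>$i)^2 * ln (x$i + T)) T :> (\<Sum>i\<in>UNIV. (\<alpha>$i)^2 / (x$i + T))"
      by (rule DERIV_sum, rule deriv_kln) (use xpos that in \<open>simp add: add_pos_nonneg\<close>)
    show ?thesis unfolding F_def[abs_def] F'_def by (rule DERIV_diff[OF a b])
  qed
  have KI: "qd (u T) (u T) \<le> F' T" if T: "T \<ge> 0" for T
  proof -
    define z where "z = (\<chi> i. \<alpha>$i / (x$i + T))"
    define \<gamma> where "\<gamma> = transpose Q *v u T"
    have uz: "u T = P *v z" unfolding u_def z_def ..
    have xT: "x$i + T > 0" for i using xpos[of i] T by simp
    have yT: "y$i + T > 0" for i using ypos[of i] T by simp
    have az: "\<alpha>$i = (x$i + T) * z$i" for i unfolding z_def using xT[of i] by simp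
    have vu: "v \<bullet> u T = (\<Sum>i\<in>UNIV. (x$i + T) * (z$i)^2)"
      unfolding uz inner_Pz \<alpha>_def[symmetric] by (simp add: inner_vec_def az power2_eq_square mult.assoc)
    have uXu: "u T \<bullet> ((P ** diag_mat x ** transpose P) *v u T) = (\<Sum>i\<in>UNIV. x$i * (z$i)^2)"
      unfolding fun_quad uz orth_tPPv[OF oP] by (simp add: power2_eq_square mult.assoc)
    have uu: "u T \<bullet> u T = (\<Sum>i\<in>UNIV. (z$i)^2)"
      unfolding uz inner_PP[OF oP] by (simp add: inner_vec_def power2_eq_square)
    have uu2: "u T \<bullet> u T = (\<Sum>j\<in>UNIV. (\<gamma>$j)^2)"
    proof -
      have "(transpose Q *v u T) \<bullet> (transpose Q *v u T) = u T \<bullet> u T"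
        using inner_PP[of "transpose Q"] oQ by (simp add: orthogonal_matrix_transpose)
      thus ?thesis unfolding \<gamma>_def by (simp add: inner_vec_def power2_eq_square)
    qed
    have uYu: "u T \<bullet> ((Q ** diag_mat y ** transpose Q) *v u T) = (\<Sum>j\<in>UNIV. y$j * (\<gamma>$j)^2)"
      unfolding fun_quad \<gamma>_def by (simp add: power2_eq_square mult.assoc)
    have vu2: "v \<bullet> u T = (\<Sum>j\<in>UNIV. \<beta>$j * \<gamma>$j)"
    proof -
      have "v \<bullet> u T = v \<bullet> (Q *v \<gamma>)" unfolding \<gamma>_def orth_PtPv[OF oQ] ..
      also have "\<dots> = \<beta> \<bullet> \<gamma>" unfolding inner_Pz \<beta>_def ..
      finally show ?thesis by (simp add: inner_vec_def)
    qed
    have trm: "2 * (\<beta>$j * \<gamma>$j) - (y$j + T) * (\<gamma>$j)^2 \<le> (\<beta>$j)^2 / (y$j + T)" for j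
    proof -
      have "0 \<le> (\<beta>$j - (y$j + T) * \<gamma>$j)^2 / (y$j + T)" using yT[of j] by simp
      also have "(\<beta>$j - (y$j + T) * \<gamma>$j)^2 / (y$j + T) = (\<beta>$j)^2 / (y$j + T) - (2 * (\<beta>$j * \<gamma>$j) - (y$j + T) * (\<gamma>$j)^2)"
        using yT[of j] by (simp add: field_simps power2_eq_square)
      finally show ?thesis by simp
    qed
    have "(\<Sum>j\<in>UNIV. 2 * (\<beta>$j * \<gamma>$j) - (y$j + T) * (\<gamma>$j)^2) \<le> (\<Sum>j\<in>UNIV. (\<beta>$j)^2 / (y$j + T))"
      by (rule sum_mono) (rule trm)
    hence B: "2 * (v \<bullet> u T) - (u T \<bullet> ((Q ** diag_mat y ** transpose Q) *v u T)) - T * (u T \<bullet> u T)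
        \<le> (\<Sum>j\<in>UNIV. (\<beta>$j)^2 / (y$j + T))"
      unfolding vu2 uYu uu2 by (simp add: sum_subtractf sum_distrib_left algebra_simps sum.distrib)
    have A: "(\<Sum>i\<in>UNIV. (\<alpha>$i)^2 / (x$i + T)) = v \<bullet> u T"
    proof -
      have "(\<alpha>$i)^2 / (x$i + T) = (x$i + T) * (z$i)^2" for i
      proof -
        have "(\<alpha>$i)^2 / (x$i + T) = ((x$i + T) * (x$i + T) * (z$i)^2) / (x$i + T)"
          unfolding az by (simp add: power2_eq_square mult_ac)
        also have "\<dots> = (x$i + T) * (z$i)^2" using xT[of i] by simp
        finally show ?thesis .
      qed
      thus ?thesis unfolding vu by simp
    qed
    have vXT: "v \<bullet> u T = u T \<bullet> ((P ** diag_mat x ** transpose P) *v u T) + T * (u T \<bullet> u T)"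
      unfolding vu uXu uu by (simp add: sum_distrib_left sum.distrib[symmetric] algebra_simps)
    have qdu: "qd (u T) (u T) = u T \<bullet> ((P ** diag_mat x ** transpose P) *v u T) - u T \<bullet> ((Q ** diag_mat y ** transpose Q) *v u T)"
      unfolding qd_def Ddef by (simp add: matrix_vector_mult_diff_rdistrib inner_diff_right)
    show ?thesis unfolding F'_def A qdu using B vXT by linarith
  qed
  have F'pos: "0 \<le> F' T" if "T \<ge> 0" for T using KI[OF that] qpos[of "u T"] by linarith
  have Fmono: "F a \<le> F b" if "0 \<le> a" "a \<le> b" for a b
  proof (rule mono_deriv[where f'=F', OF that(2)])
    fix t assume "a \<le> t" "t \<le> b"
    hence "t \<ge> 0" using that by simp
    thus "DERIV F t :> F' t \<and> 0 \<le> F' t" using dF F'pos by blast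
  qed
  have FT: "F T \<le> (\<Sum>j\<in>UNIV. (\<beta>$j)^2 * y$j) / T" if T: "T > 0" for T
  proof -
    have "F T \<le> (\<Sum>j\<in>UNIV. (\<beta>$j)^2 * ln (y$j + T)) - (\<Sum>i\<in>UNIV. (\<alpha>$i)^2 * ln T)"
    proof -
      have "(\<alpha>$i)^2 * ln T \<le> (\<alpha>$i)^2 * ln (x$i + T)" for i
      proof (rule mult_left_mono)
        show "ln T \<le> ln (x$i + T)" using xpos[of i] T by simp
      qed simp
      hence "(\<Sum>i\<in>UNIV. (\<alpha>$i)^2 * ln T) \<le> (\<Sum>i\<in>UNIV. (\<alpha>$i)^2 * ln (x$i + T))"
        by (rule sum_mono)
      thus ?thesis unfolding F_def by linarith
    qed
    also have "(\<Sum>i\<in>UNIV. (\<alpha>$i)^2 * ln T) = (\<Sum>j\<in>UNIV. (\<beta>$j)^2 * ln T)"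
      unfolding sum_distrib_right[symmetric] sa sb ..
    also have "(\<Sum>j\<in>UNIV. (\<beta>$j)^2 * ln (y$j + T)) - (\<Sum>j\<in>UNIV. (\<beta>$j)^2 * ln T)
        = (\<Sum>j\<in>UNIV. (\<beta>$j)^2 * ln (1 + y$j / T))"
    proof -
      have "ln (y$j + T) - ln T = ln (1 + y$j / T)" for j
      proof -
        have "1 + y$j / T = (y$j + T) / T" using T by (simp add: field_simps)
        thus ?thesis using T ypos[of j] by (simp add: ln_div)
      qed
      thus ?thesis by (simp add: sum_subtractf[symmetric] right_diff_distrib[symmetric])
    qed
    also have "\<dots> \<le> (\<Sum>j\<in>UNIV. (\<beta>$j)^2 * (y$j / T))"
    proof (rule sum_mono)
      fix j
      show "(\<beta>$j)^2 * ln (1 + y$j / T) \<le> (\<beta>$j)^2 * (y$j / T)"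
        by (rule mult_left_mono[OF ln_add_one_self_le_self]) (use ypos[of j] T in simp_all)
    qed
    also have "\<dots> = (\<Sum>j\<in>UNIV. (\<beta>$j)^2 * y$j) / T"
      by (simp add: sum_divide_distrib)
    finally show ?thesis .
  qed
  have FC0: "F C \<le> 0"
  proof (rule ccontr)
    assume "\<not> F C \<le> 0"
    hence FCp: "F C > 0" by simp
    define M where "M = (\<Sum>j\<in>UNIV. (\<beta>$j)^2 * y$j)"
    have M0: "M \<ge> 0" unfolding M_def using ypos by (intro sum_nonneg) (simp add: less_imp_le)
    define T where "T = C + M / F C + 1"
    have MF: "M / F C \<ge> 0" using M0 FCp by simp
    have Tp: "T > 0" "C \<le> T" unfolding T_def using c MF by auto
    have "F C \<le> F T" using Fmono[of C T] c Tp by simp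
    also have "\<dots> \<le> M / T" using FT[OF Tp(1)] unfolding M_def .
    finally have "F C * T \<le> M" using Tp by (simp add: le_divide_eq)
    moreover have "F C * T > M"
    proof -
      have "F C * T = F C * C + M + F C" unfolding T_def using FCp by (simp add: field_simps)
      moreover have "F C * C > 0" using FCp c by simp
      ultimately show ?thesis using FCp by linarith
    qed
    ultimately show False by simp
  qed
  define V where "V = (\<Sum>i\<in>UNIV. (\<alpha>$i)^2 * ln (x$i)) - (\<Sum>j\<in>UNIV. (\<beta>$j)^2 * ln (y$j))"
  have VF: "V = - F 0" unfolding V_def F_def by simp
  have KV: "F C - F c \<le> V" using Fmono[of 0 c] c FC0 VF by simp
  define A where "A = ln C - ln c"
  have A0: "A \<ge> 0" unfolding A_def using c by simp
  define bv where "bv T = P *v (\<chi> i. \<alpha>$i * (Phi (x$i) T - Phi (x$i) c))" for T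
  define b0 where "b0 = bv C"
  define Qb where "Qb = qd b0 b0"
  define g where "g = transpose P *v (D *v b0)"
  have qPz: "qd b0 (P *v w) = (\<Sum>i\<in>UNIV. g$i * w$i)" for w
  proof -
    have "qd b0 (P *v w) = (P *v w) \<bullet> (D *v b0)" unfolding qd_def by (rule sym_inner[OF symD])
    also have "\<dots> = (D *v b0) \<bullet> (P *v w)" by (rule inner_commute)
    also have "\<dots> = g \<bullet> w" unfolding inner_Pz g_def ..
    finally show ?thesis by (simp add: inner_vec_def)
  qed
  have qbv: "qd b0 (bv T) = (\<Sum>i\<in>UNIV. (g$i * \<alpha>$i) * (Phi (x$i) T - Phi (x$i) c))" for T
    unfolding bv_def qPz by (simp add: mult.assoc)
  have qbu: "qd b0 (u T) = (\<Sum>i\<in>UNIV. (g$i * \<alpha>$i) / (x$i + T))" for T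
    unfolding u_def qPz by simp
  have Hpos: "0 \<le> \<sigma>^2 * Qb * A - 2 * \<sigma> * Qb + (F C - F c)" for \<sigma>
  proof -
    define H where "H T = \<sigma>^2 * Qb * (ln T - ln c) - 2 * \<sigma> * (\<Sum>i\<in>UNIV. (g$i * \<alpha>$i) * (Phi (x$i) T - Phi (x$i) c)) + F T - F c" for T
    define H' where "H' T = \<sigma>^2 * Qb * (1 / T - 0) - 2 * \<sigma> * (\<Sum>i\<in>UNIV. (g$i * \<alpha>$i) / (sqrt T * (x$i + T))) + F' T - 0" for T
    have dH: "DERIV H T :> H' T" if T: "T > 0" for T
    proof -
      have h1: "DERIV (\<lambda>T. \<sigma>^2 * Qb * (ln T - ln c)) T :> \<sigma>^2 * Qb * (1 / T - 0)"
        by (rule DERIV_cmult, rule DERIV_diff[OF DERIV_ln_divide[OF T] DERIV_const])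
      have h2: "DERIV (\<lambda>T. 2 * \<sigma> * (\<Sum>i\<in>UNIV. (g$i * \<alpha>$i) * (Phi (x$i) T - Phi (x$i) c))) T
          :> 2 * \<sigma> * (\<Sum>i\<in>UNIV. (g$i * \<alpha>$i) / (sqrt T * (x$i + T)))"
        by (rule DERIV_cmult, rule DERIV_sum, rule deriv_kPhi[OF xpos T])
      have h3: "DERIV F T :> F' T" using dF T by simp
      show ?thesis unfolding H_def[abs_def] H'_def
        by (rule DERIV_diff[OF DERIV_add[OF DERIV_diff[OF h1 h2] h3] DERIV_const])
    qed
    have H'pos: "0 \<le> H' T" if T: "T > 0" for T
    proof -
      define s where "s = \<sigma> / sqrt T"
      have sT: "sqrt T > 0" using T by simp
      have e1: "\<sigma>^2 * Qb * (1 / T - 0) = s^2 * Qb"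
        unfolding s_def using T by (simp add: power_divide)
      have e2: "(\<Sum>i\<in>UNIV. (g$i * \<alpha>$i) / (sqrt T * (x$i + T))) = qd b0 (u T) / sqrt T"
        unfolding qbu by (simp add: sum_divide_distrib divide_divide_eq_left mult.commute)
      have e3: "2 * \<sigma> * (qd b0 (u T) / sqrt T) = 2 * s * qd b0 (u T)" unfolding s_def by simp
      have q: "qd (s *\<^sub>R b0 - u T) (s *\<^sub>R b0 - u T) = s^2 * Qb - 2 * s * qd b0 (u T) + qd (u T) (u T)"
        using qsym[of "u T" b0] unfolding qd_def Qb_def bil_expand(2)
        by (simp add: matrix_vector_mult_scaleR power2_eq_square)
      have "0 \<le> qd (s *\<^sub>R b0 - u T) (s *\<^sub>R b0 - u T)" by (rule qpos)
      thus ?thesis unfolding H'_def e1 e2 e3 using q KI[of T] T by simp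
    qed
    have "H c \<le> H C"
    proof (rule mono_deriv[where f'=H', OF c(2)])
      fix t assume "c \<le> t" "t \<le> C"
      hence "t > 0" using c by simp
      thus "DERIV H t :> H' t \<and> 0 \<le> H' t" using dH H'pos by blast
    qed
    moreover have "H c = 0" unfolding H_def by simp
    moreover have "H C = \<sigma>^2 * Qb * A - 2 * \<sigma> * Qb + (F C - F c)"
      unfolding H_def A_def Qb_def b0_def qbv[symmetric] by simp
    ultimately show ?thesis by simp
  qed
  have QbA: "Qb \<le> A * V"
  proof -
    have "Qb \<le> A * (F C - F c)" by (rule cs_param[OF A0]) (use Hpos qpos Qb_def in auto)
    also have "\<dots> \<le> A * V" using KV A0 by (intro mult_left_mono)
    finally show ?thesis .
  qed
  define i1 where "i1 = P *v (\<chi> i. \<alpha>$i * Phi (x$i) c)"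
  define i3 where "i3 = P *v (\<chi> i. \<alpha>$i * (pi / sqrt (x$i) - Phi (x$i) C))"
  have piSv: "pi *\<^sub>R Sv = i1 + b0 + i3"
  proof -
    have "i1 + b0 + i3 = P *v ((\<chi> i. \<alpha>$i * Phi (x$i) c) + (\<chi> i. \<alpha>$i * (Phi (x$i) C - Phi (x$i) c))
         + (\<chi> i. \<alpha>$i * (pi / sqrt (x$i) - Phi (x$i) C)))"
      unfolding i1_def i3_def b0_def bv_def by (simp add: matrix_vector_right_distrib)
    also have "(\<chi> i. \<alpha>$i * Phi (x$i) c) + (\<chi> i. \<alpha>$i * (Phi (x$i) C - Phi (x$i) c))
         + (\<chi> i. \<alpha>$i * (pi / sqrt (x$i) - Phi (x$i) C)) = pi *\<^sub>R (\<chi> i. \<alpha>$i / sqrt (x$i))"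
      by (simp add: vec_eq_iff algebra_simps)
    finally show ?thesis unfolding Sv_def by (simp add: matrix_vector_mult_scaleR)
  qed
  have qpi: "qd (pi *\<^sub>R Sv) (pi *\<^sub>R Sv) = pi^2 * qd Sv Sv"
    unfolding qd_def by (simp add: matrix_vector_mult_scaleR power2_eq_square)
  have three: "qd (i1 + b0 + i3) (i1 + b0 + i3) \<le> 3 * (qd i1 i1 + Qb + qd i3 i3)"
    unfolding qd_def Qb_def by (rule psd_three[OF symD psdD])
  define d where "d = real CARD('n)"
  define tr where "tr = trace D"
  have tr0: "tr \<ge> 0" unfolding tr_def by (rule trace_nonneg[OF psdD])
  have d0: "d \<ge> 0" unfolding d_def by simp
  have tb: "qd w w \<le> d * tr * (w \<bullet> w)" for w
    unfolding qd_def d_def tr_def by (rule psd_trace_bound[OF symD psdD])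
  have i1n: "i1 \<bullet> i1 \<le> 4 * c / lam^2 * nv"
  proof -
    have "i1 \<bullet> i1 = (\<Sum>i\<in>UNIV. (\<alpha>$i)^2 * (Phi (x$i) c)^2)"
      unfolding i1_def inner_PP[OF oP] by (simp add: inner_vec_def power2_eq_square mult_ac)
    also have "\<dots> \<le> (\<Sum>i\<in>UNIV. (\<alpha>$i)^2 * (4 * c / lam^2))"
    proof (intro sum_mono mult_left_mono)
      fix i
      have p0: "0 \<le> Phi (x$i) c" using Phi_nonneg[OF xpos[of i]] c by simp
      have "Phi (x$i) c \<le> 2 * sqrt c / x$i" using Phi_le[OF xpos[of i]] c by simp
      also have "\<dots> \<le> 2 * sqrt c / lam" using lam xpos[of i] c by (intro divide_left_mono) auto
      finally have "(Phi (x$i) c)^2 \<le> (2 * sqrt c / lam)^2" using p0 by (intro power_mono)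
      also have "(2 * sqrt c / lam)^2 = 4 * c / lam^2" using c by (simp add: power_divide power_mult_distrib)
      finally show "(Phi (x$i) c)^2 \<le> 4 * c / lam^2" .
    qed simp
    also have "\<dots> = 4 * c / lam^2 * nv" unfolding sum_distrib_right[symmetric] sa by simp
    finally show ?thesis .
  qed
  have i3n: "i3 \<bullet> i3 \<le> 4 / C * nv"
  proof -
    have "i3 \<bullet> i3 = (\<Sum>i\<in>UNIV. (\<alpha>$i)^2 * (pi / sqrt (x$i) - Phi (x$i) C)^2)"
      unfolding i3_def inner_PP[OF oP] by (simp add: inner_vec_def power2_eq_square mult_ac)
    also have "\<dots> \<le> (\<Sum>i\<in>UNIV. (\<alpha>$i)^2 * (4 / C))"
    proof (intro sum_mono mult_left_mono)
      fix i
      have Cp: "C > 0" using c by simp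
      note t = Phi_tail[OF xpos[of i] Cp]
      have "(pi / sqrt (x$i) - Phi (x$i) C)^2 \<le> (2 / sqrt C)^2" using t by (intro power_mono)
      also have "(2 / sqrt C)^2 = 4 / C" using Cp by (simp add: power_divide)
      finally show "(pi / sqrt (x$i) - Phi (x$i) C)^2 \<le> 4 / C" .
    qed simp
    also have "\<dots> = 4 / C * nv" unfolding sum_distrib_right[symmetric] sa by simp
    finally show ?thesis .
  qed
  have q1: "qd i1 i1 \<le> d * tr * (4 * c / lam^2 * nv)"
    using tb[of i1] i1n mult_left_mono[OF i1n, of "d * tr"] d0 tr0 by simp
  have q3: "qd i3 i3 \<le> d * tr * (4 / C * nv)"
    using tb[of i3] i3n mult_left_mono[OF i3n, of "d * tr"] d0 tr0 by simp
  have main: "pi^2 * qd Sv Sv \<le> 3 * (d * tr * (4 * c / lam^2 * nv) + A * V + d * tr * (4 / C * nv))"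
    using qpi three piSv q1 q3 QbA by simp
  have final: "qd Sv Sv \<le> 3 * A / pi^2 * V + (12 * c * d / (pi^2 * lam^2) + 12 * d / (pi^2 * C)) * tr * nv"
  proof -
    have pp: "pi^2 > 0" by simp
    have "qd Sv Sv \<le> 3 * (d * tr * (4 * c / lam^2 * nv) + A * V + d * tr * (4 / C * nv)) / pi^2"
      using main pp by (simp add: le_divide_eq mult.commute)
    also have "\<dots> = 3 * A / pi^2 * V + (12 * c * d / (pi^2 * lam^2) + 12 * d / (pi^2 * C)) * tr * nv"
      by (simp add: field_simps)
    finally show ?thesis .
  qed
  show ?thesis using final unfolding qd_def Sv_def \<alpha>_def \<beta>_def V_def A_def nv_def d_def tr_def .
qed

lemma spd_decomp:
  fixes A :: "real^'n^'n"
  assumes "spd A"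
  shows "\<exists>P d. orthogonal_matrix P \<and> A = P ** diag_mat d ** transpose P \<and> (\<forall>i. d$i > 0)"
proof -
  have sym: "transpose A = A" using assms unfolding spd_def sym_mat_def by simp
  obtain P d where oP: "orthogonal_matrix P" and A: "A = P ** diag_mat d ** transpose P"
    using spectral[OF sym] by blast
  have "d$i > 0" for i
  proof -
    define p where "p = P *v axis i (1::real)"
    have tp: "transpose P *v p = axis i 1" unfolding p_def by (rule orth_tPPv[OF oP])
    have "p \<noteq> 0"
    proof
      assume "p = 0"
      hence "transpose P *v p = 0" by simp
      thus False using tp by (simp add: axis_eq_0_iff)
    qed
    hence "p \<bullet> (A *v p) > 0" using assms unfolding spd_def by blast
    also have "p \<bullet> (A *v p) = d$i" unfolding A fun_quad tp
      by (simp add: axis_def if_distrib[where f="\<lambda>x. x * _"] if_distrib[where f="\<lambda>x. _ * x"] sum.delta cong: if_cong)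
    finally show ?thesis .
  qed
  thus ?thesis using oP A by blast
qed

lemma lam_props:
  fixes A P :: "real^'n^'n"
  assumes spdA: "spd A" and oP: "orthogonal_matrix P" and A: "A = P ** diag_mat d ** transpose P"
  shows "lambda_min A > 0" "lambda_min A \<le> d$i"
proof -
  define E where "E = {l. \<exists>v. v \<noteq> 0 \<and> A *v v = l *\<^sub>R v}"
  have dE: "d$j \<in> E" for j
  proof -
    define p where "p = P *v axis j (1::real)"
    have tp: "transpose P *v p = axis j 1" unfolding p_def by (rule orth_tPPv[OF oP])
    have "p \<noteq> 0"
    proof
      assume "p = 0"
      hence "transpose P *v p = 0" by simp
      thus False using tp by (simp add: axis_eq_0_iff)
    qed
    moreover have "A *v p = d$j *\<^sub>R p"
    proof -
      have "(\<chi> k. d$k * (transpose P *v p)$k) = d$j *\<^sub>R axis j 1" unfolding tp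
        by (simp add: vec_eq_iff axis_def)
      hence "A *v p = P *v (d$j *\<^sub>R axis j 1)" unfolding A fun_mv by simp
      thus ?thesis unfolding p_def by (simp add: matrix_vector_mult_scaleR)
    qed
    ultimately show ?thesis unfolding E_def by blast
  qed
  have Esub: "E \<subseteq> range (\<lambda>i. d$i)"
  proof
    fix l assume "l \<in> E"
    then obtain v where v0: "v \<noteq> 0" and Av: "A *v v = l *\<^sub>R v" unfolding E_def by blast
    define z where "z = transpose P *v v"
    have vz: "v = P *v z" unfolding z_def by (simp add: orth_PtPv[OF oP])
    have "z \<noteq> 0" using v0 vz by auto
    then obtain i where zi: "z$i \<noteq> 0" by (auto simp: vec_eq_iff)
    have "P *v (\<chi> k. d$k * z$k) = P *v (l *\<^sub>R z)"
      using Av unfolding A fun_mv z_def[symmetric] by (simp add: vz matrix_vector_mult_scaleR)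
    hence "transpose P *v (P *v (\<chi> k. d$k * z$k)) = transpose P *v (P *v (l *\<^sub>R z))" by simp
    hence "(\<chi> k. d$k * z$k) = l *\<^sub>R z" unfolding orth_tPPv[OF oP] .
    hence "d$i * z$i = l * z$i" by (simp add: vec_eq_iff)
    hence "l = d$i" using zi by simp
    thus "l \<in> range (\<lambda>i. d$i)" by simp
  qed
  have fE: "finite E" by (rule finite_subset[OF Esub]) simp
  have neE: "E \<noteq> {}" using dE by blast
  have Epos: "l > 0" if lE: "l \<in> E" for l
  proof -
    obtain v where v0: "v \<noteq> 0" and Av: "A *v v = l *\<^sub>R v" using lE unfolding E_def by blast
    have pd: "\<forall>x. x \<noteq> 0 \<longrightarrow> x \<bullet> (A *v x) > 0" using spdA unfolding spd_def by (rule conjunct2)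
    have "0 < v \<bullet> (A *v v)" using pd v0 by blast
    hence lv: "0 < l * (v \<bullet> v)" unfolding Av inner_scaleR_right .
    have vv: "0 < v \<bullet> v" by (rule inner_gt_zero_iff[THEN iffD2, OF v0])
    show ?thesis by (rule zero_less_mult_pos2[OF lv vv])
  qed
  show "lambda_min A > 0" unfolding lambda_min_def E_def[symmetric]
    using Min_in[OF fE neE] Epos by blast
  show "lambda_min A \<le> d$i" unfolding lambda_min_def E_def[symmetric]
    using Min_le[OF fE dE] .
qed

theorem lemma3p2:
  fixes X Y :: "real^'n^'n" and c C :: real
  assumes "spd X" and "spd Y" and "Y \<preceq>\<^sub>L X"
    and "0 < c" and "c \<le> C"
  shows "mat_inv_sqrt X ** (X - Y) ** mat_inv_sqrt X \<preceq>\<^sub>L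
           (3 * (ln C - ln c) / pi\<^sup>2) *\<^sub>R (mat_log X - mat_log Y)
           + ((12 * c * real CARD('n) / (pi\<^sup>2 * (lambda_min X)\<^sup>2)
               + 12 * real CARD('n) / (pi\<^sup>2 * C)) * trace (X - Y)) *\<^sub>R mat 1"
proof -
  obtain P x where oP: "orthogonal_matrix P" and Xd: "X = P ** diag_mat x ** transpose P" and xpos: "\<forall>i. x$i > 0"
    using spd_decomp[OF assms(1)] by blast
  obtain Q y where oQ: "orthogonal_matrix Q" and Yd: "Y = Q ** diag_mat y ** transpose Q" and ypos: "\<forall>i. y$i > 0"
    using spd_decomp[OF assms(2)] by blast
  have LX: "mat_log X = P ** diag_mat (\<chi> i. ln (x$i)) ** transpose P"
    unfolding mat_log_def by (rule mat_fun_eq[OF oP Xd])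
  have LY: "mat_log Y = Q ** diag_mat (\<chi> i. ln (y$i)) ** transpose Q"
    unfolding mat_log_def by (rule mat_fun_eq[OF oQ Yd])
  have SX: "mat_inv_sqrt X = P ** diag_mat (\<chi> i. 1 / sqrt (x$i)) ** transpose P"
    unfolding mat_inv_sqrt_def by (rule mat_fun_eq[OF oP Xd])
  define D where "D = X - Y"
  have symX: "transpose X = X" using assms(1) unfolding spd_def sym_mat_def by simp
  have symY: "transpose Y = Y" using assms(2) unfolding spd_def sym_mat_def by simp
  have symD: "transpose D = D" unfolding D_def using symX symY
    by (simp add: transpose_def vec_eq_iff)
  have psdD: "0 \<le> w \<bullet> (D *v w)" for w
    using assms(3) unfolding loewner_le_def D_def
    by (simp add: matrix_vector_mult_diff_rdistrib inner_diff_right)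
  have lam: "lambda_min X > 0" "\<And>i. lambda_min X \<le> x$i"
    using lam_props[OF assms(1) oP Xd] by auto
  have DD: "D = P ** diag_mat x ** transpose P - Q ** diag_mat y ** transpose Q"
    unfolding D_def using Xd Yd by simp
  show ?thesis unfolding loewner_le_def D_def[symmetric]
  proof
    fix v :: "real^'n"
    define S where "S = mat_inv_sqrt X"
    have symS: "transpose S = S" unfolding S_def SX by (rule fun_sym)
    have Sv: "S *v v = P *v (\<chi> i. (transpose P *v v)$i / sqrt (x$i))"
      unfolding S_def SX fun_mv by simp
    have lhs: "v \<bullet> ((S ** D ** S) *v v) = (S *v v) \<bullet> (D *v (S *v v))"
    proof -
      have "v \<bullet> ((S ** D ** S) *v v) = v \<bullet> (S *v (D *v (S *v v)))"
        by (simp add: matrix_vector_mul_assoc matrix_mul_assoc)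
      also have "\<dots> = (D *v (S *v v)) \<bullet> (S *v v)" by (rule sym_inner[OF symS])
      finally show ?thesis by (simp add: inner_commute)
    qed
    have rhs: "v \<bullet> (((3 * (ln C - ln c) / pi\<^sup>2) *\<^sub>R (mat_log X - mat_log Y)
           + ((12 * c * real CARD('n) / (pi\<^sup>2 * (lambda_min X)\<^sup>2)
               + 12 * real CARD('n) / (pi\<^sup>2 * C)) * trace D) *\<^sub>R mat 1) *v v)
        = 3 * (ln C - ln c) / pi^2 * ((\<Sum>i\<in>UNIV. ((transpose P *v v)$i)^2 * ln (x$i)) - (\<Sum>j\<in>UNIV. ((transpose Q *v v)$j)^2 * ln (y$j)))
       + (12 * c * real CARD('n) / (pi^2 * (lambda_min X)^2) + 12 * real CARD('n) / (pi^2 * C)) * trace D * (v \<bullet> v)"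
    proof -
      have qx: "v \<bullet> (mat_log X *v v) = (\<Sum>i\<in>UNIV. ((transpose P *v v)$i)^2 * ln (x$i))"
        unfolding LX fun_quad by (simp add: power2_eq_square mult_ac)
      have qy: "v \<bullet> (mat_log Y *v v) = (\<Sum>i\<in>UNIV. ((transpose Q *v v)$i)^2 * ln (y$i))"
        unfolding LY fun_quad by (simp add: power2_eq_square mult_ac)
      show ?thesis
        by (simp add: matrix_vector_mult_add_rdistrib scaleR_matrix_vector_assoc[symmetric]
            matrix_vector_mult_diff_rdistrib inner_add_right inner_diff_right qx qy)
    qed
    have core': "(S *v v) \<bullet> (D *v (S *v v)) \<le> 3 * (ln C - ln c) / pi^2 * ((\<Sum>i\<in>UNIV. ((transpose P *v v)$i)^2 * ln (x$i)) - (\<Sum>j\<in>UNIV. ((transpose Q *v v)$j)^2 * ln (y$j)))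
       + (12 * c * real CARD('n) / (pi^2 * (lambda_min X)^2) + 12 * real CARD('n) / (pi^2 * C)) * trace D * (v \<bullet> v)"
      unfolding Sv by (rule core[OF oP oQ _ _ DD symD psdD lam assms(4,5)]) (use xpos ypos in auto)
    show "v \<bullet> ((mat_inv_sqrt X ** D ** mat_inv_sqrt X) *v v)
       \<le> v \<bullet> (((3 * (ln C - ln c) / pi\<^sup>2) *\<^sub>R (mat_log X - mat_log Y)
           + ((12 * c * real CARD('n) / (pi\<^sup>2 * (lambda_min X)\<^sup>2)
               + 12 * real CARD('n) / (pi\<^sup>2 * C)) * trace D) *\<^sub>R mat 1) *v v)"
      unfolding rhs S_def[symmetric] lhs using core' .
  qed
qed

end
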